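(* Let $(Z_t)_{t\in\mathbb Z}$ be independent random variables with values in $[0,B]$, let $\mathcal F_n=\sigma(Z_t:t\le n)$ and $\mathcal F=(\mathcal F_n)_{n\in\mathbb Z}$. Fix $s\in\mathbb N$, $n_0\in\mathbb Z$ and $T\ge n_0$. For $n\ge n_0$ let $S_n=\sum_{t=n_0}^n B_t(Z_t-\mathbb E[Z_t])$ and $t_n=\sum_{t=n_0}^n B_t$, where each $B_t\in\{0,1\}$ is $\mathcal F_{t-1}$-measurable. Let $\phi\in\{n_0,\dots,T+1\}$ be an $\mathcal F$-stopping time such that either $t_\phi\ge s$ or $\phi=T+1$. Then for every $\delta>0$, $$\mathbb P[S_\phi\ge t_\phi\delta,\ \phi\le T]\le \exp(-2s\delta^2B^{-2}),\qquad \mathbb P[|S_\phi|\ge t_\phi\delta,\ \phi\le T]\le 2\exp(-2s\delta^2B^{-2}).$$ *)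

theory Defs
  imports "HOL-Probability.Probability"
begin

definition nat_filt :: "'a measure \<Rightarrow> (int \<Rightarrow> 'a \<Rightarrow> real) \<Rightarrow> int \<Rightarrow> 'a measure" where
  "nat_filt M Z n = sigma (space M) {Z t -` A \<inter> space M | t A. t \<le> n \<and> A \<in> sets borel}"

end

theory Submission
  imports Defs
begin

locale hsetup = prob_space M for M :: "'a measure" +
  fixes Z :: "int \<Rightarrow> 'a \<Rightarrow> real"
  assumes indep: "indep_vars (\<lambda>_. borel) Z UNIV"
begin

definition gen :: "int \<Rightarrow> 'a set set" where
  "gen n = {Z t -` A \<inter> space M | t A. t \<le> n \<and> A \<in> sets borel}"

lemma Z_meas[measurable]: "Z t \<in> borel_measurable M"
  using indep unfolding indep_vars_def by auto

lemma gen_sub: "gen n \<subseteq> sets M"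
  unfolding gen_def by auto

lemma gen_Pow: "gen n \<subseteq> Pow (space M)"
  unfolding gen_def by auto

lemma space_F[simp]: "space (nat_filt M Z n) = space M"
  unfolding nat_filt_def by (simp add: space_measure_of_conv)

lemma sets_F: "sets (nat_filt M Z n) = sigma_sets (space M) (gen n)"
  unfolding nat_filt_def gen_def[symmetric] using gen_Pow by (simp add: sets_measure_of)

lemma F_sub: "sets (nat_filt M Z n) \<subseteq> sets M"
  unfolding sets_F using gen_sub by (rule sets.sigma_sets_subset)

lemma F_mono: "m \<le> n \<Longrightarrow> sets (nat_filt M Z m) \<subseteq> sets (nat_filt M Z n)"
  unfolding sets_F by (rule sigma_sets_subseteq) (auto simp: gen_def; fastforce)

lemma Z_F: "t \<le> n \<Longrightarrow> Z t \<in> borel_measurable (nat_filt M Z n)"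
  unfolding measurable_def sets_F by (auto simp: gen_def intro!: sigma_sets.Basic)

lemma meas_mono: "f \<in> measurable (nat_filt M Z m) N \<Longrightarrow> m \<le> n \<Longrightarrow> f \<in> measurable (nat_filt M Z n) N"
  using measurable_mono[of N N "nat_filt M Z m" "nat_filt M Z n"] F_mono by auto

lemma meas_M: "f \<in> measurable (nat_filt M Z m) N \<Longrightarrow> f \<in> measurable M N"
  using measurable_mono[of N N "nat_filt M Z m" M] F_sub by auto

lemma indep_step:
  assumes X: "X \<in> borel_measurable (nat_filt M Z (n - 1))" and g: "g \<in> borel_measurable borel"
  shows "indep_var borel X borel (\<lambda>\<omega>. g (Z n \<omega>))"
proof -
  define E where "E = (\<lambda>i. {Z i -` A \<inter> space M | A. A \<in> sets borel})"
  define I where "I = (\<lambda>b::bool. if b then {..n-1} else {n})"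
  have "indep_sets (\<lambda>i. sigma_sets (space M) (E i)) UNIV"
    using indep unfolding indep_vars_def E_def by auto
  then have "indep_sets E UNIV"
    by (rule indep_sets_mono_sets) (auto intro: sigma_sets.Basic)
  then have "indep_sets E (\<Union>j\<in>UNIV. I j)" using indep_sets_mono_index[of "(\<Union>j\<in>UNIV. I j)" UNIV E] by auto
  then have ind: "indep_sets (\<lambda>j. sigma_sets (space M) (\<Union>i\<in>I j. E i)) UNIV"
  proof (rule indep_sets_collect_sigma)
    show "Int_stable (E i)" for i
      unfolding E_def Int_stable_def
      apply clarify
      subgoal for a b A B by (rule exI[of _ "A \<inter> B"]) auto
      done
    show "disjoint_family_on I UNIV"
      unfolding disjoint_family_on_def I_def by auto
  qed
  have g1: "(\<Union>i\<in>I True. E i) = gen (n - 1)"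
    unfolding I_def E_def gen_def by auto force+
  have Y: "(\<lambda>\<omega>. g (Z n \<omega>)) \<in> borel_measurable M" using g by measurable
  have XM: "X \<in> borel_measurable M" using X by (rule meas_M)
  show ?thesis
    unfolding indep_var_eq
  proof (intro conjI)
    show "random_variable borel X" using XM by simp
    show "random_variable borel (\<lambda>\<omega>. g (Z n \<omega>))" using Y by simp
    show "indep_set (sigma_sets (space M) {X -` A \<inter> space M |A. A \<in> sets borel})
       (sigma_sets (space M) {(\<lambda>\<omega>. g (Z n \<omega>)) -` A \<inter> space M |A. A \<in> sets borel})"
      unfolding indep_set_def
    proof (rule indep_sets_mono_sets[OF ind])
      fix j :: bool
      show "case_bool (sigma_sets (space M) {X -` A \<inter> space M |A. A \<in> sets borel})
           (sigma_sets (space M) {(\<lambda>\<omega>. g (Z n \<omega>)) -` A \<inter> space M |A. A \<in> sets borel}) j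
          \<subseteq> sigma_sets (space M) (\<Union>i\<in>I j. E i)"
      proof (cases j)
        case True
        have "sigma_sets (space M) {X -` A \<inter> space M |A. A \<in> sets borel} \<subseteq> sets (nat_filt M Z (n-1))"
        proof (rule sigma_algebra.sigma_sets_subset)
          show "sigma_algebra (space M) (sets (nat_filt M Z (n-1)))"
            using sets.sigma_algebra_axioms[of "nat_filt M Z (n-1)"] by simp
          show "{X -` A \<inter> space M |A. A \<in> sets borel} \<subseteq> sets (nat_filt M Z (n - 1))"
            proof
            fix x assume "x \<in> {X -` A \<inter> space M |A. A \<in> sets borel}"
            then obtain A where "A \<in> sets borel" "x = X -` A \<inter> space M" by blast
            then show "x \<in> sets (nat_filt M Z (n - 1))" using measurable_sets[OF X, of A] by simp
          qed
        qed
        then have "sigma_sets (space M) {X -` A \<inter> space M |A. A \<in> sets borel} \<subseteq> sigma_sets (space M) (\<Union>i\<in>I True. E i)"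
          unfolding g1 sets_F .
        moreover have jT: "j = True" using True by simp
        ultimately show ?thesis by (simp only: jT bool.case)
      next
        case False
        have "{(\<lambda>\<omega>. g (Z n \<omega>)) -` A \<inter> space M |A. A \<in> sets borel} \<subseteq> E n"
          unfolding E_def
        proof
          fix x assume "x \<in> {(\<lambda>\<omega>. g (Z n \<omega>)) -` A \<inter> space M |A. A \<in> sets borel}"
          then obtain A where A: "A \<in> sets borel" "x = (\<lambda>\<omega>. g (Z n \<omega>)) -` A \<inter> space M" by blast
          have "g -` A \<in> sets borel" using measurable_sets[OF g A(1)] by simp
          moreover have "x = Z n -` (g -` A) \<inter> space M" using A(2) by auto
          ultimately show "x \<in> {Z n -` A \<inter> space M |A. A \<in> sets borel}" by blast
        qed
        moreover have jF: "j = False" using False by simp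
        ultimately show ?thesis unfolding jF bool.case I_def if_False by (intro sigma_sets_subseteq) auto
      qed
    qed
  qed
qed


lemma integrable_bdd:
  fixes f :: "'a \<Rightarrow> real" and K :: real
  assumes "f \<in> borel_measurable M" "\<And>\<omega>. \<omega> \<in> space M \<Longrightarrow> \<bar>f \<omega>\<bar> \<le> K"
  shows "integrable M f"
  using assms by (intro integrable_const_bound[where B=K]) auto

lemma main:
  fixes b :: "int \<Rightarrow> 'a \<Rightarrow> real" and \<phi> :: "'a \<Rightarrow> int" and l c Bd :: real and n0 :: int
  assumes bounded: "\<And>t \<omega>. \<omega> \<in> space M \<Longrightarrow> 0 \<le> Z t \<omega> \<and> Z t \<omega> \<le> Bd"
    and b_01: "\<And>t \<omega>. \<omega> \<in> space M \<Longrightarrow> b t \<omega> \<in> {0, 1}"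
    and b_pred: "\<And>t. b t \<in> borel_measurable (nat_filt M Z (t - 1))"
    and stop: "stopping_time (nat_filt M Z) \<phi>"
    and hoeff: "\<And>t. expectation (\<lambda>\<omega>. exp (l * (Z t \<omega> - expectation (Z t)))) \<le> exp c"
    and W_def: "W = (\<lambda>n \<omega>. exp (\<Sum>t\<in>{n0..n}. if t \<le> \<phi> \<omega> then b t \<omega> * (l * (Z t \<omega> - expectation (Z t)) - c) else 0))"
  shows "n0 - 1 \<le> n \<Longrightarrow> integrable M (W n) \<and> expectation (W n) \<le> 1"
proof -
  define D where "D = (\<lambda>t \<omega>. if t \<le> \<phi> \<omega> then b t \<omega> * (l * (Z t \<omega> - expectation (Z t)) - c) else 0)"
  have W: "W n \<omega> = exp (\<Sum>t\<in>{n0..n}. D t \<omega>)" for n \<omega> unfolding W_def D_def by simp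
  have predF: "Measurable.pred (nat_filt M Z n) (\<lambda>\<omega>. t \<le> \<phi> \<omega>)" if "t \<le> n" for t n
  proof -
    have "Measurable.pred (nat_filt M Z (t - 1)) (\<lambda>\<omega>. t - 1 < \<phi> \<omega>)"
      by (rule stopping_timeD2[OF stop])
    then have "Measurable.pred (nat_filt M Z n) (\<lambda>\<omega>. t - 1 < \<phi> \<omega>)"
      by (rule meas_mono) (use that in simp)
    moreover have "(\<lambda>\<omega>. t - 1 < \<phi> \<omega>) = (\<lambda>\<omega>. t \<le> \<phi> \<omega>)" by auto
    ultimately show ?thesis by simp
  qed
  have bF: "b t \<in> borel_measurable (nat_filt M Z n)" if "t \<le> n" for t n
    by (rule meas_mono[OF b_pred]) (use that in simp)
  have DF: "D t \<in> borel_measurable (nat_filt M Z n)" if "t \<le> n" for t n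
  proof -
    note [measurable] = predF[OF that] bF[OF that] Z_F[OF that]
    show ?thesis unfolding D_def by measurable
  qed
  have WF: "W n \<in> borel_measurable (nat_filt M Z n)" for n
  proof -
    have [measurable]: "(\<lambda>\<omega>. \<Sum>t\<in>{n0..n}. D t \<omega>) \<in> borel_measurable (nat_filt M Z n)"
      by (rule borel_measurable_sum) (rule DF, simp)
    show ?thesis unfolding W by measurable
  qed
  have WM: "W n \<in> borel_measurable M" for n by (rule meas_M[OF WF])
  define K where "K = (\<lambda>t. \<bar>l\<bar> * (Bd + \<bar>expectation (Z t)\<bar>) + \<bar>c\<bar>)"
  have Dbd: "\<bar>D t \<omega>\<bar> \<le> K t" if "\<omega> \<in> space M" for t \<omega>
  proof -
    have b: "\<bar>b t \<omega>\<bar> \<le> 1" "0 \<le> \<bar>b t \<omega>\<bar>" using b_01[OF that, of t] by auto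
    have z: "\<bar>Z t \<omega>\<bar> \<le> Bd" using bounded[OF that, of t] by auto
    have "\<bar>l * (Z t \<omega> - expectation (Z t)) - c\<bar> \<le> \<bar>l\<bar> * \<bar>Z t \<omega> - expectation (Z t)\<bar> + \<bar>c\<bar>"
      by (metis abs_mult abs_triangle_ineq4)
    also have "\<dots> \<le> K t" unfolding K_def
      by (intro add_mono mult_left_mono order.trans[OF abs_triangle_ineq4]) (use z in auto)
    finally have 1: "\<bar>l * (Z t \<omega> - expectation (Z t)) - c\<bar> \<le> K t" .
    have "\<bar>b t \<omega> * (l * (Z t \<omega> - expectation (Z t)) - c)\<bar> \<le> 1 * K t"
      unfolding abs_mult by (intro mult_mono b 1) auto
    then show ?thesis unfolding D_def using 1 order.trans[OF abs_ge_zero 1] by auto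
  qed
  have Wbd: "\<bar>W n \<omega>\<bar> \<le> exp (\<Sum>t\<in>{n0..n}. K t)" if "\<omega> \<in> space M" for n \<omega>
  proof -
    have "(\<Sum>t\<in>{n0..n}. D t \<omega>) \<le> (\<Sum>t\<in>{n0..n}. K t)"
      by (intro sum_mono) (use Dbd[OF that] abs_le_iff in blast)
    then show ?thesis unfolding W by simp
  qed
  have Wint: "integrable M (W n)" for n by (rule integrable_bdd[OF WM Wbd])
  show "n0 - 1 \<le> n \<Longrightarrow> integrable M (W n) \<and> expectation (W n) \<le> 1"
  proof (induction n rule: int_ge_induct)
    case base
    have "W (n0 - 1) = (\<lambda>_. 1)" unfolding W by (simp add: fun_eq_iff)
    then show ?case using Wint by (simp add: prob_space)
  next
    case (step n)
    define m where "m = n + 1"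
    define G where "G = (\<lambda>\<omega>. if m \<le> \<phi> \<omega> then b m \<omega> else 0)"
    define Y where "Y = (\<lambda>\<omega>. exp (l * (Z m \<omega> - expectation (Z m)) - c))"
    have G01: "G \<omega> \<in> {0,1}" if "\<omega> \<in> space M" for \<omega> using b_01[OF that] by (auto simp: G_def)
    have decomp: "W m \<omega> = W n \<omega> * (1 - G \<omega>) + (W n \<omega> * G \<omega>) * Y \<omega>" if "\<omega> \<in> space M" for \<omega>
    proof -
      have "{n0..m} = insert m {n0..n}" "m \<notin> {n0..n}" using step(1) by (auto simp: m_def)
      then have "W m \<omega> = W n \<omega> * exp (D m \<omega>)" unfolding W by (simp add: exp_add)
      moreover have "exp (D m \<omega>) = (1 - G \<omega>) + G \<omega> * Y \<omega>"
        using b_01[OF that, of m] unfolding D_def G_def Y_def by auto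
      ultimately show ?thesis by (simp add: algebra_simps)
    qed
    have GF: "G \<in> borel_measurable (nat_filt M Z n)"
    proof -
      have "Measurable.pred (nat_filt M Z n) (\<lambda>\<omega>. n < \<phi> \<omega>)" by (rule stopping_timeD2[OF stop])
      moreover have "(\<lambda>\<omega>. n < \<phi> \<omega>) = (\<lambda>\<omega>. m \<le> \<phi> \<omega>)" by (auto simp: m_def)
      ultimately have [measurable]: "Measurable.pred (nat_filt M Z n) (\<lambda>\<omega>. m \<le> \<phi> \<omega>)" by simp
      have [measurable]: "b m \<in> borel_measurable (nat_filt M Z n)" using b_pred[of m] by (simp add: m_def)
      show ?thesis unfolding G_def by measurable
    qed
    have GM: "G \<in> borel_measurable M" by (rule meas_M[OF GF])
    have WGF: "(\<lambda>\<omega>. W n \<omega> * G \<omega>) \<in> borel_measurable (nat_filt M Z (m - 1))"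
      using WF[of n] GF by (simp add: m_def)
    have gmeas: "(\<lambda>z. exp (l * (z - expectation (Z m)) - c)) \<in> borel_measurable borel" by measurable
    have ind: "indep_var borel (\<lambda>\<omega>. W n \<omega> * G \<omega>) borel Y"
      using indep_step[OF WGF gmeas] unfolding Y_def .
    have YM: "Y \<in> borel_measurable M" unfolding Y_def by measurable
    have Ybd: "\<bar>Y \<omega>\<bar> \<le> exp (K m)" if "\<omega> \<in> space M" for \<omega>
    proof -
      have z: "\<bar>Z m \<omega>\<bar> \<le> Bd" using bounded[OF that, of m] by auto
      have "\<bar>l * (Z m \<omega> - expectation (Z m)) - c\<bar> \<le> \<bar>l\<bar> * \<bar>Z m \<omega> - expectation (Z m)\<bar> + \<bar>c\<bar>"
        by (metis abs_mult abs_triangle_ineq4)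
      also have "\<dots> \<le> K m" unfolding K_def
        by (intro add_mono mult_left_mono order.trans[OF abs_triangle_ineq4]) (use z in auto)
      finally show ?thesis unfolding Y_def by simp
    qed
    have Yint: "integrable M Y" by (rule integrable_bdd[OF YM Ybd])
    have Gbd: "\<bar>G \<omega>\<bar> \<le> 1" if "\<omega> \<in> space M" for \<omega> using G01[OF that] by auto
    have WGint: "integrable M (\<lambda>\<omega>. W n \<omega> * G \<omega>)"
      by (rule integrable_bdd[where K="exp (\<Sum>t\<in>{n0..n}. K t) * 1"])
         (use WM GM in measurable, unfold abs_mult, intro mult_mono, use Wbd Gbd in auto)
    have W1Gint: "integrable M (\<lambda>\<omega>. W n \<omega> * (1 - G \<omega>))"
      using Wint[of n] WGint by (simp add: algebra_simps Bochner_Integration.integrable_diff)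
    have prodint: "integrable M (\<lambda>\<omega>. (W n \<omega> * G \<omega>) * Y \<omega>)"
      by (rule indep_var_integrable[OF ind WGint Yint])
    have "expectation (W m) = expectation (\<lambda>\<omega>. W n \<omega> * (1 - G \<omega>) + (W n \<omega> * G \<omega>) * Y \<omega>)"
      by (rule Bochner_Integration.integral_cong[OF refl]) (use decomp in auto)
    also have "\<dots> = expectation (\<lambda>\<omega>. W n \<omega> * (1 - G \<omega>)) + expectation (\<lambda>\<omega>. W n \<omega> * G \<omega>) * expectation Y"
      by (subst Bochner_Integration.integral_add[OF W1Gint prodint])
         (simp add: indep_var_lebesgue_integral[OF ind WGint Yint])
    also have "\<dots> \<le> expectation (\<lambda>\<omega>. W n \<omega> * (1 - G \<omega>)) + expectation (\<lambda>\<omega>. W n \<omega> * G \<omega>) * 1"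
    proof -
      have "expectation Y = expectation (\<lambda>\<omega>. exp (l * (Z m \<omega> - expectation (Z m)))) * exp (- c)"
      proof -
        have "Y = (\<lambda>\<omega>. exp (l * (Z m \<omega> - expectation (Z m))) * exp (- c))"
          unfolding Y_def by (simp add: fun_eq_iff exp_add[symmetric])
        then show ?thesis by simp
      qed
      also have "\<dots> \<le> exp c * exp (- c)" by (intro mult_right_mono hoeff) auto
      finally have "expectation Y \<le> 1" by (simp add: exp_minus)
      moreover have "0 \<le> expectation (\<lambda>\<omega>. W n \<omega> * G \<omega>)"
        by (intro integral_nonneg_AE AE_I2) (use G01 in \<open>fastforce simp: W\<close>)
      ultimately show ?thesis by (intro add_left_mono mult_left_mono)
    qed
    also have "\<dots> = expectation (W n)"
      using Bochner_Integration.integral_add[OF W1Gint WGint] by (simp add: algebra_simps)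
    also have "\<dots> \<le> 1" using step by simp
    finally show ?case using Wint m_def by simp
  qed
qed


lemma hoeff_pos:
  fixes f :: "'a \<Rightarrow> real"
  assumes bd: "\<And>\<omega>. \<omega> \<in> space M \<Longrightarrow> 0 \<le> f \<omega> \<and> f \<omega> \<le> Bd"
    and fm: "f \<in> borel_measurable M" and l: "l > 0"
  shows "expectation (\<lambda>\<omega>. exp (l * (f \<omega> - expectation f))) \<le> exp (l\<^sup>2 * Bd\<^sup>2 / 8)"
proof -
  interpret iv: interval_bounded_random_variable M f 0 Bd
    by unfold_locales (use fm bd in \<open>auto intro!: AE_I2\<close>)
  have nn: "(\<integral>\<^sup>+\<omega>. exp (l * (f \<omega> - expectation f)) \<partial>M) \<le> ennreal (exp (l\<^sup>2 * (Bd - 0)\<^sup>2 / 8))"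
    by (rule iv.Hoeffdings_lemma_nn_integral[OF l])
  have fi: "integrable M f" by (rule iv.integrable)
  have int: "integrable M (\<lambda>\<omega>. exp (l * (f \<omega> - expectation f)))"
  proof (rule integrable_bdd[where K="exp (l * (Bd + \<bar>expectation f\<bar>))"])
    show "(\<lambda>\<omega>. exp (l * (f \<omega> - expectation f))) \<in> borel_measurable M" using fm by measurable
    fix \<omega> assume "\<omega> \<in> space M"
    then have "f \<omega> - expectation f \<le> Bd + \<bar>expectation f\<bar>" using bd by fastforce
    then show "\<bar>exp (l * (f \<omega> - expectation f))\<bar> \<le> exp (l * (Bd + \<bar>expectation f\<bar>))"
      using l by simp
  qed
  have "ennreal (expectation (\<lambda>\<omega>. exp (l * (f \<omega> - expectation f)))) \<le> ennreal (exp (l\<^sup>2 * Bd\<^sup>2 / 8))"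
    using nn nn_integral_eq_integral[OF int] by simp
  then show ?thesis by (simp add: ennreal_le_iff)
qed

lemma hoeff_all:
  fixes f :: "'a \<Rightarrow> real"
  assumes bd: "\<And>\<omega>. \<omega> \<in> space M \<Longrightarrow> 0 \<le> f \<omega> \<and> f \<omega> \<le> Bd"
    and fm: "f \<in> borel_measurable M"
  shows "expectation (\<lambda>\<omega>. exp (l * (f \<omega> - expectation f))) \<le> exp (l\<^sup>2 * Bd\<^sup>2 / 8)"
proof (cases "l > 0")
  case True
  then show ?thesis using hoeff_pos[OF bd fm] by blast
next
  case False
  show ?thesis
  proof (cases "l = 0")
    case True then show ?thesis by (simp add: prob_space)
  next
    case False2: False
    with False have l: "- l > 0" by simp
    have fi: "integrable M f"
      by (rule integrable_bdd[where K=Bd, OF fm]) (use bd in fastforce)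
    have bd': "0 \<le> Bd - f \<omega> \<and> Bd - f \<omega> \<le> Bd" if "\<omega> \<in> space M" for \<omega> using bd[OF that] by auto
    have "expectation (\<lambda>\<omega>. exp (- l * ((Bd - f \<omega>) - expectation (\<lambda>\<omega>. Bd - f \<omega>)))) \<le> exp ((- l)\<^sup>2 * Bd\<^sup>2 / 8)"
      by (rule hoeff_pos[OF bd' _ l]) (use fm in measurable)
    moreover have "expectation (\<lambda>\<omega>. Bd - f \<omega>) = Bd - expectation f"
      using fi by (simp add: Bochner_Integration.integral_diff prob_space)
    ultimately show ?thesis by (simp add: algebra_simps)
  qed
qed


lemma key:
  fixes b :: "int \<Rightarrow> 'a \<Rightarrow> real" and \<phi> :: "'a \<Rightarrow> int" and Bd \<delta> \<sigma> :: real and n0 T :: int and s :: nat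
  assumes bounded: "\<And>t \<omega>. \<omega> \<in> space M \<Longrightarrow> 0 \<le> Z t \<omega> \<and> Z t \<omega> \<le> Bd"
    and T_ge: "T \<ge> n0"
    and b_01: "\<And>t \<omega>. \<omega> \<in> space M \<Longrightarrow> b t \<omega> \<in> {0, 1}"
    and b_pred: "\<And>t. b t \<in> borel_measurable (nat_filt M Z (t - 1))"
    and stop: "stopping_time (nat_filt M Z) \<phi>"
    and \<phi>_cond: "\<And>\<omega>. \<omega> \<in> space M \<Longrightarrow>
         (\<Sum>t=n0..\<phi> \<omega>. b t \<omega>) \<ge> real s \<or> \<phi> \<omega> = T + 1"
    and \<delta>_pos: "\<delta> > 0" and Bd: "Bd > 0" and \<sigma>: "\<sigma> = 1 \<or> \<sigma> = -1"
  shows "\<exists>B\<in>sets M. {\<omega> \<in> space M. \<sigma> * (\<Sum>t=n0..\<phi> \<omega>. b t \<omega> * (Z t \<omega> - expectation (Z t)))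
              \<ge> (\<Sum>t=n0..\<phi> \<omega>. b t \<omega>) * \<delta> \<and> \<phi> \<omega> \<le> T} \<subseteq> B
          \<and> measure M B \<le> exp (- 2 * real s * \<delta>\<^sup>2 / Bd\<^sup>2)"
proof -
  define l where "l = \<sigma> * (4 * \<delta> / Bd\<^sup>2)"
  define c where "c = l\<^sup>2 * Bd\<^sup>2 / 8"
  have \<sigma>2: "\<sigma>\<^sup>2 = 1" using \<sigma> by auto
  have c_eq: "c = 2 * \<delta>\<^sup>2 / Bd\<^sup>2"
    unfolding c_def l_def using Bd \<sigma>2 by (simp add: power_mult_distrib power_divide field_simps power2_eq_square)
  define W where "W = (\<lambda>n \<omega>. exp (\<Sum>t\<in>{n0..n}. if t \<le> \<phi> \<omega> then b t \<omega> * (l * (Z t \<omega> - expectation (Z t)) - c) else 0))"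
  have hoeff: "expectation (\<lambda>\<omega>. exp (l * (Z t \<omega> - expectation (Z t)))) \<le> exp c" for t
    unfolding c_def by (rule hoeff_all[OF bounded Z_meas])
  have WT: "integrable M (W T) \<and> expectation (W T) \<le> 1"
  proof -
    have nT: "n0 - 1 \<le> T" using T_ge by simp
    show ?thesis by (rule main[OF bounded b_01 b_pred stop hoeff W_def nT])
  qed
  define e where "e = exp (2 * real s * \<delta>\<^sup>2 / Bd\<^sup>2)"
  define B where "B = {\<omega> \<in> space M. W T \<omega> \<ge> e}"
  have WM: "W T \<in> borel_measurable M" using WT by auto
  have Bs: "B \<in> sets M" unfolding B_def using WM by measurable
  have "measure M B \<le> expectation (W T) / e"
    unfolding B_def
    by (rule integral_Markov_inequality_measure[where A="space M"]) (use WT in \<open>auto simp: W_def e_def\<close>)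
  also have "\<dots> \<le> 1 / e" using WT by (simp add: e_def divide_right_mono)
  also have "\<dots> = exp (- 2 * real s * \<delta>\<^sup>2 / Bd\<^sup>2)" unfolding e_def by (simp add: exp_minus field_simps)
  finally have mB: "measure M B \<le> exp (- 2 * real s * \<delta>\<^sup>2 / Bd\<^sup>2)" .
  have sub: "\<omega> \<in> B" if "\<omega> \<in> space M" and ev: "\<sigma> * (\<Sum>t=n0..\<phi> \<omega>. b t \<omega> * (Z t \<omega> - expectation (Z t)))
              \<ge> (\<Sum>t=n0..\<phi> \<omega>. b t \<omega>) * \<delta>" and le: "\<phi> \<omega> \<le> T" for \<omega>
  proof -
    define S where "S = (\<Sum>t=n0..\<phi> \<omega>. b t \<omega> * (Z t \<omega> - expectation (Z t)))"
    define Tt where "Tt = (\<Sum>t=n0..\<phi> \<omega>. b t \<omega>)"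
    have Tts: "Tt \<ge> real s" using \<phi>_cond[OF that(1)] le unfolding Tt_def by auto
    have "(\<Sum>t\<in>{n0..T}. if t \<le> \<phi> \<omega> then b t \<omega> * (l * (Z t \<omega> - expectation (Z t)) - c) else 0)
        = (\<Sum>t\<in>{t\<in>{n0..T}. t \<le> \<phi> \<omega>}. b t \<omega> * (l * (Z t \<omega> - expectation (Z t)) - c))"
      by (rule sum.inter_filter[symmetric]) simp
    also have "{t\<in>{n0..T}. t \<le> \<phi> \<omega>} = {n0..\<phi> \<omega>}" using le by auto
    also have "(\<Sum>t\<in>{n0..\<phi> \<omega>}. b t \<omega> * (l * (Z t \<omega> - expectation (Z t)) - c)) = l * S - c * Tt"
      unfolding S_def Tt_def by (simp add: algebra_simps sum_subtractf sum_distrib_left sum.distrib)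
    finally have Wv: "W T \<omega> = exp (l * S - c * Tt)" unfolding W_def by simp
    have "l * S = (4 * \<delta> / Bd\<^sup>2) * (\<sigma> * S)" unfolding l_def by simp
    also have "\<dots> \<ge> (4 * \<delta> / Bd\<^sup>2) * (Tt * \<delta>)"
      using ev \<delta>_pos Bd unfolding S_def Tt_def by (intro mult_left_mono) auto
    finally have "l * S - c * Tt \<ge> (4 * \<delta> / Bd\<^sup>2) * (Tt * \<delta>) - c * Tt" by simp
    moreover have "(4 * \<delta> / Bd\<^sup>2) * (Tt * \<delta>) - c * Tt = Tt * (2 * \<delta>\<^sup>2 / Bd\<^sup>2)"
      unfolding c_eq by (simp add: field_simps power2_eq_square)
    moreover have "Tt * (2 * \<delta>\<^sup>2 / Bd\<^sup>2) \<ge> real s * (2 * \<delta>\<^sup>2 / Bd\<^sup>2)"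
      using Tts by (intro mult_right_mono) auto
    moreover have "real s * (2 * \<delta>\<^sup>2 / Bd\<^sup>2) = 2 * real s * \<delta>\<^sup>2 / Bd\<^sup>2" by simp
    ultimately have "l * S - c * Tt \<ge> 2 * real s * \<delta>\<^sup>2 / Bd\<^sup>2" by linarith
    then show ?thesis unfolding B_def e_def using that(1) Wv by simp
  qed
  show ?thesis using Bs mB sub by blast
qed

end

theorem lemma1:
  fixes M :: "'a measure" and Z :: "int \<Rightarrow> 'a \<Rightarrow> real" and Bd :: real
    and b :: "int \<Rightarrow> 'a \<Rightarrow> real" and s :: nat and n0 T :: int
    and \<phi> :: "'a \<Rightarrow> int" and \<delta> :: real
  assumes "prob_space M"
    and indep: "prob_space.indep_vars M (\<lambda>_. borel) Z UNIV"
    and bounded: "\<And>t \<omega>. \<omega> \<in> space M \<Longrightarrow> 0 \<le> Z t \<omega> \<and> Z t \<omega> \<le> Bd"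
    and T_ge: "T \<ge> n0"
    and b_01: "\<And>t \<omega>. \<omega> \<in> space M \<Longrightarrow> b t \<omega> \<in> {0, 1}"
    and b_pred: "\<And>t. b t \<in> borel_measurable (nat_filt M Z (t - 1))"
    and stop: "stopping_time (nat_filt M Z) \<phi>"
    and \<phi>_range: "\<And>\<omega>. \<omega> \<in> space M \<Longrightarrow> \<phi> \<omega> \<in> {n0..T+1}"
    and \<phi>_cond: "\<And>\<omega>. \<omega> \<in> space M \<Longrightarrow>
         (\<Sum>t=n0..\<phi> \<omega>. b t \<omega>) \<ge> real s \<or> \<phi> \<omega> = T + 1"
    and \<delta>_pos: "\<delta> > 0"
  shows "measure M {\<omega> \<in> space M.
            (\<Sum>t=n0..\<phi> \<omega>. b t \<omega> * (Z t \<omega> - prob_space.expectation M (Z t)))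
              \<ge> (\<Sum>t=n0..\<phi> \<omega>. b t \<omega>) * \<delta> \<and> \<phi> \<omega> \<le> T}
           \<le> exp (- 2 * real s * \<delta>\<^sup>2 / Bd\<^sup>2)
     \<and> measure M {\<omega> \<in> space M.
            \<bar>\<Sum>t=n0..\<phi> \<omega>. b t \<omega> * (Z t \<omega> - prob_space.expectation M (Z t))\<bar>
              \<ge> (\<Sum>t=n0..\<phi> \<omega>. b t \<omega>) * \<delta> \<and> \<phi> \<omega> \<le> T}
           \<le> 2 * exp (- 2 * real s * \<delta>\<^sup>2 / Bd\<^sup>2)"
  proof -
  interpret hsetup M Z using assms(1) indep by (simp add: hsetup_def hsetup_axioms_def)
  have Bd0: "Bd \<ge> 0" using bounded not_empty by fastforce
  show ?thesis
  proof (cases "Bd = 0")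
    case True
    then show ?thesis by (simp add: prob_le_1 order.trans[OF prob_le_1])
  next
    case False
    with Bd0 have Bd: "Bd > 0" by simp
    obtain B1 where B1: "B1 \<in> sets M" and sub1: "{\<omega> \<in> space M. 1 * (\<Sum>t=n0..\<phi> \<omega>. b t \<omega> * (Z t \<omega> - expectation (Z t)))
              \<ge> (\<Sum>t=n0..\<phi> \<omega>. b t \<omega>) * \<delta> \<and> \<phi> \<omega> \<le> T} \<subseteq> B1"
      and m1: "measure M B1 \<le> exp (- 2 * real s * \<delta>\<^sup>2 / Bd\<^sup>2)"
      using key[OF bounded T_ge b_01 b_pred stop \<phi>_cond \<delta>_pos Bd, of 1] by auto
    obtain B2 where B2: "B2 \<in> sets M" and sub2: "{\<omega> \<in> space M. -1 * (\<Sum>t=n0..\<phi> \<omega>. b t \<omega> * (Z t \<omega> - expectation (Z t)))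
              \<ge> (\<Sum>t=n0..\<phi> \<omega>. b t \<omega>) * \<delta> \<and> \<phi> \<omega> \<le> T} \<subseteq> B2"
      and m2: "measure M B2 \<le> exp (- 2 * real s * \<delta>\<^sup>2 / Bd\<^sup>2)"
      using key[OF bounded T_ge b_01 b_pred stop \<phi>_cond \<delta>_pos Bd, of "-1"] by auto
    have "measure M {\<omega> \<in> space M.
            (\<Sum>t=n0..\<phi> \<omega>. b t \<omega> * (Z t \<omega> - prob_space.expectation M (Z t)))
              \<ge> (\<Sum>t=n0..\<phi> \<omega>. b t \<omega>) * \<delta> \<and> \<phi> \<omega> \<le> T} \<le> measure M B1"
      by (rule finite_measure_mono[OF _ B1]) (use sub1 in auto)
    moreover have "measure M {\<omega> \<in> space M.
            \<bar>\<Sum>t=n0..\<phi> \<omega>. b t \<omega> * (Z t \<omega> - prob_space.expectation M (Z t))\<bar>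
              \<ge> (\<Sum>t=n0..\<phi> \<omega>. b t \<omega>) * \<delta> \<and> \<phi> \<omega> \<le> T} \<le> measure M (B1 \<union> B2)"
    proof (rule finite_measure_mono)
      show "B1 \<union> B2 \<in> sets M" using B1 B2 by auto
    next
      show "{\<omega> \<in> space M.
            \<bar>\<Sum>t=n0..\<phi> \<omega>. b t \<omega> * (Z t \<omega> - prob_space.expectation M (Z t))\<bar>
              \<ge> (\<Sum>t=n0..\<phi> \<omega>. b t \<omega>) * \<delta> \<and> \<phi> \<omega> \<le> T} \<subseteq> B1 \<union> B2"
      proof
        fix \<omega> assume "\<omega> \<in> {\<omega> \<in> space M.
            \<bar>\<Sum>t=n0..\<phi> \<omega>. b t \<omega> * (Z t \<omega> - prob_space.expectation M (Z t))\<bar>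
              \<ge> (\<Sum>t=n0..\<phi> \<omega>. b t \<omega>) * \<delta> \<and> \<phi> \<omega> \<le> T}"
        then have "\<omega> \<in> {\<omega> \<in> space M. 1 * (\<Sum>t=n0..\<phi> \<omega>. b t \<omega> * (Z t \<omega> - expectation (Z t)))
              \<ge> (\<Sum>t=n0..\<phi> \<omega>. b t \<omega>) * \<delta> \<and> \<phi> \<omega> \<le> T} \<or>
              \<omega> \<in> {\<omega> \<in> space M. -1 * (\<Sum>t=n0..\<phi> \<omega>. b t \<omega> * (Z t \<omega> - expectation (Z t)))
              \<ge> (\<Sum>t=n0..\<phi> \<omega>. b t \<omega>) * \<delta> \<and> \<phi> \<omega> \<le> T}"
          by (auto simp: abs_if split: if_splits)
        then show "\<omega> \<in> B1 \<union> B2" using sub1 sub2 by blast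
      qed
    qed
    moreover have "measure M (B1 \<union> B2) \<le> measure M B1 + measure M B2"
      using B1 B2 by (rule measure_Un_le)
    ultimately show ?thesis using m1 m2 by linarith
  qed
qed

end
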